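(* Let $m_1,m_2$ be positive integers and let $n$ be an even integer with $m_2 \geq n \geq \lceil \log m_1 \rceil+\lceil \log m_2 \rceil+1$. Then $BR(C_{n},K_{m_1,m_2})\leq 32m_1+49m_2$.
   Context: $C_n$ is the cycle on $n$ vertices and $K_{a,b}$ the complete bipartite graph with parts of sizes $a$ and $b$. For bipartite graphs $G_1,\ldots,G_k$, the bipartite Ramsey number $BR(G_1,\ldots,G_k)$ is the smallest integer $b$ such that for every coloring of the edges of $K_{b,b}$ with colors $1,\ldots,k$ there is, for some $i$, a copy of $G_i$ all of whose edges have color $i$. $\log$ denotes the logarithm to base $2$. *)

theory Defs
  imports Complex_Main
begin

text \<open>The host graph K_{b,b}: left part {..<b}, right part {..<b}; a colouring is
  c x y = colour of the edge between left vertex x and right vertex y.\<close>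

text \<open>A copy of the (even) cycle C_n, n = 2k, in colour col: distinct left vertices
  a 0, ..., a (k-1) and distinct right vertices d 0, ..., d (k-1) with the cycle
  a 0 - d 0 - a 1 - d 1 - ... - a (k-1) - d (k-1) - a 0 monochromatic.\<close>
definition has_cycle_copy :: "nat \<Rightarrow> (nat \<Rightarrow> nat \<Rightarrow> nat) \<Rightarrow> nat \<Rightarrow> nat \<Rightarrow> bool" where
  "has_cycle_copy b c col n \<longleftrightarrow>
     (\<exists>a d :: nat \<Rightarrow> nat.
        inj_on a {..<n div 2} \<and> inj_on d {..<n div 2} \<and>
        a ` {..<n div 2} \<subseteq> {..<b} \<and> d ` {..<n div 2} \<subseteq> {..<b} \<and>
        (\<forall>i < n div 2. c (a i) (d i) = col \<and> c (a ((i + 1) mod (n div 2))) (d i) = col))"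

definition has_Kst_copy :: "nat \<Rightarrow> (nat \<Rightarrow> nat \<Rightarrow> nat) \<Rightarrow> nat \<Rightarrow> nat \<Rightarrow> nat \<Rightarrow> bool" where
  "has_Kst_copy b c col s t \<longleftrightarrow>
     (\<exists>A B. A \<subseteq> {..<b} \<and> B \<subseteq> {..<b} \<and>
        ((card A = s \<and> card B = t) \<or> (card A = t \<and> card B = s)) \<and>
        (\<forall>x\<in>A. \<forall>y\<in>B. c x y = col))"

definition BR_cycle_K :: "nat \<Rightarrow> nat \<Rightarrow> nat \<Rightarrow> nat" where
  "BR_cycle_K n s t = (LEAST b. \<forall>c :: nat \<Rightarrow> nat \<Rightarrow> nat.
      (\<forall>x<b. \<forall>y<b. c x y \<in> {1, 2}) \<longrightarrow>
      has_cycle_copy b c 1 n \<or> has_Kst_copy b c 2 s t)"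

end

theory Submission
  imports Defs
begin


definition adj :: "(nat \<Rightarrow> nat \<Rightarrow> nat) \<Rightarrow> bool \<times> nat \<Rightarrow> bool \<times> nat \<Rightarrow> bool" where
  "adj c u v \<longleftrightarrow> fst u \<noteq> fst v \<and>
     (if fst u then c (snd v) (snd u) = 1 else c (snd u) (snd v) = 1)"

definition nb :: "(nat \<Rightarrow> nat \<Rightarrow> nat) \<Rightarrow> (bool \<times> nat) set \<Rightarrow> (bool \<times> nat) set \<Rightarrow> (bool \<times> nat) set" where
  "nb c A X = {v \<in> A. \<exists>x\<in>X. adj c x v}"

definition onside :: "bool \<Rightarrow> (bool \<times> nat) set \<Rightarrow> bool" where
  "onside s X \<longleftrightarrow> (\<forall>x\<in>X. fst x = s)"

definition NK :: "(nat \<Rightarrow> nat \<Rightarrow> nat) \<Rightarrow> nat \<Rightarrow> nat \<Rightarrow> nat \<Rightarrow> bool" where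
  "NK c b m1 m2 \<longleftrightarrow> (\<forall>X Y. X \<subseteq> UNIV \<times> {..<b} \<longrightarrow> Y \<subseteq> UNIV \<times> {..<b} \<longrightarrow>
      onside False X \<longrightarrow> onside True Y \<longrightarrow>
      ((m1 \<le> card X \<and> m2 \<le> card Y) \<or> (m2 \<le> card X \<and> m1 \<le> card Y)) \<longrightarrow>
      (\<exists>x\<in>X. \<exists>y\<in>Y. adj c x y))"

lemma adj_sym: "adj c u v = adj c v u"
  unfolding adj_def by auto

lemma adj_side: "adj c u v \<Longrightarrow> fst u \<noteq> fst v"
  unfolding adj_def by auto

lemma nb_side: "onside s X \<Longrightarrow> onside (\<not> s) (nb c A X)"
  unfolding onside_def nb_def adj_def by auto

lemma nb_mono: "X \<subseteq> Y \<Longrightarrow> nb c A X \<subseteq> nb c A Y"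
  unfolding nb_def by auto

lemma nb_sub: "nb c A X \<subseteq> A"
  unfolding nb_def by auto

lemma NK_D:
  assumes "NK c b m1 m2" "X \<subseteq> UNIV \<times> {..<b}" "Y \<subseteq> UNIV \<times> {..<b}"
    "onside False X" "onside True Y"
    "(m1 \<le> card X \<and> m2 \<le> card Y) \<or> (m2 \<le> card X \<and> m1 \<le> card Y)"
  shows "\<exists>x\<in>X. \<exists>y\<in>Y. adj c x y"
  using assms(1)[unfolded NK_def, rule_format, OF assms(2-6)] .

lemma NK_gen:
  assumes "NK c b m1 m2" "X \<subseteq> UNIV \<times> {..<b}" "Y \<subseteq> UNIV \<times> {..<b}"
    "onside s X" "onside (\<not> s) Y"
    "(m1 \<le> card X \<and> m2 \<le> card Y) \<or> (m2 \<le> card X \<and> m1 \<le> card Y)"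
  shows "\<exists>x\<in>X. \<exists>y\<in>Y. adj c x y"
proof (cases s)
  case True
  then have o: "onside False Y" "onside True X" using assms(4,5) by auto
  have "(m1 \<le> card Y \<and> m2 \<le> card X) \<or> (m2 \<le> card Y \<and> m1 \<le> card X)"
    using assms(6) by auto
  from NK_D[OF assms(1,3,2) o this] obtain y x where "y \<in> Y" "x \<in> X" "adj c y x"
    by blast
  then show ?thesis using adj_sym by blast
next
  case False
  then have o: "onside False X" "onside True Y" using assms(4,5) by auto
  show ?thesis using NK_D[OF assms(1,2,3) o assms(6)] .
qed

lemma NK_from:
  assumes rng: "\<forall>x<b. \<forall>y<b. c x y \<in> {1, 2}"
    and no: "\<not> has_Kst_copy b c 2 m1 m2"
  shows "NK c b m1 m2"
  unfolding NK_def
proof (intro allI impI)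
  fix X Y :: "(bool \<times> nat) set"
  assume X: "X \<subseteq> UNIV \<times> {..<b}" and Y: "Y \<subseteq> UNIV \<times> {..<b}"
    and sX: "onside False X" and sY: "onside True Y"
    and cd: "(m1 \<le> card X \<and> m2 \<le> card Y) \<or> (m2 \<le> card X \<and> m1 \<le> card Y)"
  show "\<exists>x\<in>X. \<exists>y\<in>Y. adj c x y"
  proof (rule ccontr)
    assume na: "\<not> (\<exists>x\<in>X. \<exists>y\<in>Y. adj c x y)"
    have iX: "inj_on snd X" using sX unfolding onside_def inj_on_def
      by (intro ballI impI) (simp add: prod_eq_iff)
    have iY: "inj_on snd Y" using sY unfolding onside_def inj_on_def
      by (intro ballI impI) (simp add: prod_eq_iff)
    have cX: "card (snd ` X) = card X" using card_image[OF iX] .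
    have cY: "card (snd ` Y) = card Y" using card_image[OF iY] .
    have sXb: "snd ` X \<subseteq> {..<b}" using X by auto
    have sYb: "snd ` Y \<subseteq> {..<b}" using Y by auto
    have col: "\<forall>x\<in>snd ` X. \<forall>y\<in>snd ` Y. c x y = 2"
    proof (intro ballI)
      fix x y assume x: "x \<in> snd ` X" and y: "y \<in> snd ` Y"
      then obtain u v where u: "u \<in> X" "x = snd u" and v: "v \<in> Y" "y = snd v" by auto
      have "fst u = False" "fst v = True" using u v sX sY unfolding onside_def by auto
      then have "c x y \<noteq> 1" using na u v unfolding adj_def by auto
      moreover have "x < b" "y < b" using x y sXb sYb by auto
      ultimately show "c x y = 2" using rng by auto
    qed
    have fX: "finite (snd ` X)" using sXb finite_subset by blast
    have fY: "finite (snd ` Y)" using sYb finite_subset by blast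
    show False
    proof (cases "m1 \<le> card X \<and> m2 \<le> card Y")
      case True
      have "m1 \<le> card (snd ` X)" using True cX by simp
      then obtain A where A: "A \<subseteq> snd ` X" "card A = m1" by (blast elim: obtain_subset_with_card_n)
      have "m2 \<le> card (snd ` Y)" using True cY by simp
      then obtain B where B: "B \<subseteq> snd ` Y" "card B = m2" by (blast elim: obtain_subset_with_card_n)
      have "A \<subseteq> {..<b}" "B \<subseteq> {..<b}" "\<forall>x\<in>A. \<forall>y\<in>B. c x y = 2"
        using A B sXb sYb col by blast+
      then have "has_Kst_copy b c 2 m1 m2" unfolding has_Kst_copy_def
        using A(2) B(2) by blast
      then show False using no by simp
    next
      case False
      then have F: "m2 \<le> card X \<and> m1 \<le> card Y" using cd by auto
      have "m2 \<le> card (snd ` X)" using F cX by simp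
      then obtain A where A: "A \<subseteq> snd ` X" "card A = m2" by (blast elim: obtain_subset_with_card_n)
      have "m1 \<le> card (snd ` Y)" using F cY by simp
      then obtain B where B: "B \<subseteq> snd ` Y" "card B = m1" by (blast elim: obtain_subset_with_card_n)
      have "A \<subseteq> {..<b}" "B \<subseteq> {..<b}" "\<forall>x\<in>A. \<forall>y\<in>B. c x y = 2"
        using A B sXb sYb col by blast+
      then have "has_Kst_copy b c 2 m1 m2" unfolding has_Kst_copy_def
        using A(2) B(2) by blast
      then show False using no by simp
    qed
  qed
qed



lemma card_diff_ge:
  assumes fB: "finite B" shows "card A - card B \<le> card (A - B)"
proof (cases "finite A")
  case True
  have "card A \<le> card ((A - B) \<union> B)" by (rule card_mono) (use True fB in auto)
  also have "\<dots> \<le> card (A - B) + card B" by (rule card_Un_le)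
  finally show ?thesis by simp
next
  case False then show ?thesis by simp
qed

lemma prune:
  assumes NK: "NK c b m1 m2" and Ab: "A \<subseteq> UNIV \<times> {..<b}" and fA: "finite A"
    and m: "0 < m1" "0 < m2"
    and sR: "3*(m1+t) + 2*m2 \<le> card (A \<inter> {v. fst v})"
    and sL: "3*(m2+t) + 2*m1 \<le> card (A \<inter> {v. \<not> fst v})"
  shows "\<exists>H \<subseteq> A. (\<forall>X\<subseteq>H. \<forall>s. onside s X \<longrightarrow> 1 \<le> card X \<longrightarrow> card X \<le> t \<longrightarrow> 3*card X + 1 \<le> card (nb c H X))
     \<and> card (A \<inter> {v. fst v}) \<le> card (H \<inter> {v. fst v}) + m2 + 3*m1
     \<and> card (A \<inter> {v. \<not> fst v}) \<le> card (H \<inter> {v. \<not> fst v}) + m1 + 3*m2"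
proof -
  define Lv where "Lv = {v::bool\<times>nat. \<not> fst v}"
  define Rv where "Rv = {v::bool\<times>nat. fst v}"
  define bad where "bad = (\<lambda>(CL, CR). CL \<subseteq> A \<inter> Lv \<and> CR \<subseteq> A \<inter> Rv \<and> card CL < m1 \<and> card CR < m2
      \<and> card (nb c A CL - CR) \<le> 3*card CL \<and> card (nb c A CR - CL) \<le> 3*card CR)"
  define f where "f = (\<lambda>(CL::(bool\<times>nat) set, CR::(bool\<times>nat) set). card CL + card CR)"
  have b0: "bad ({},{})" unfolding bad_def nb_def using m by auto
  have bb: "\<forall>y. bad y \<longrightarrow> f y < m1 + m2" unfolding bad_def f_def by auto
  obtain CC where bd: "bad CC" and mx: "\<forall>y. bad y \<longrightarrow> f y \<le> f CC"
    using Lattices_Big.ex_has_greatest_nat[OF b0 bb] by blast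
  obtain CL CR where CC: "CC = (CL, CR)" by fastforce
  have CL: "CL \<subseteq> A \<inter> Lv" and CR: "CR \<subseteq> A \<inter> Rv" and cCL: "card CL < m1" and cCR: "card CR < m2"
    and nCL: "card (nb c A CL - CR) \<le> 3*card CL" and nCR: "card (nb c A CR - CL) \<le> 3*card CR"
    using bd unfolding CC bad_def by auto
  have mx': "\<And>CL' CR'. bad (CL', CR') \<Longrightarrow> card CL' + card CR' \<le> card CL + card CR"
    using mx unfolding CC f_def by fastforce
  have fin: "\<And>X. X \<subseteq> A \<Longrightarrow> finite X" using fA finite_subset by blast
  have oCL: "onside False CL" using CL unfolding onside_def Lv_def by auto
  have oCR: "onside True CR" using CR unfolding onside_def Rv_def by auto
  have onbL: "onside True (nb c A CL)" using nb_side[OF oCL] by simp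
  have onbR: "onside False (nb c A CR)" using nb_side[OF oCR] by simp
  define H where "H = A - (CL \<union> CR \<union> nb c A CL \<union> nb c A CR)"
  have HA: "H \<subseteq> A" unfolding H_def by auto
  have expL: "3*card X + 1 \<le> card (nb c H X)"
    if X: "X \<subseteq> H" "onside False X" "1 \<le> card X" "card X \<le> t" for X
  proof (rule ccontr)
    assume neg: "\<not> 3*card X + 1 \<le> card (nb c H X)"
    define CL' where "CL' = CL \<union> X"
    have disj: "CL \<inter> X = {}" using X(1) unfolding H_def by auto
    have fX: "finite X" using X(1) HA fin by blast
    have fCL: "finite CL" using CL fin by blast
    have fCR: "finite CR" using CR fin by blast
    have cCL': "card CL' = card CL + card X" unfolding CL'_def using disj fX fCL card_Un_disjoint by blast
    have sub: "nb c A CL' - CR \<subseteq> (nb c A CL - CR) \<union> nb c H X"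
    proof
      fix v assume v: "v \<in> nb c A CL' - CR"
      then obtain x where x: "x \<in> CL'" "adj c x v" and vA: "v \<in> A" and vCR: "v \<notin> CR"
        unfolding nb_def by auto
      show "v \<in> (nb c A CL - CR) \<union> nb c H X"
      proof (cases "v \<in> nb c A CL")
        case True then show ?thesis using vCR by auto
      next
        case False
        then have xX: "x \<in> X" using x vA unfolding CL'_def nb_def by auto
        then have "fst x = False" using X(2) unfolding onside_def by auto
        then have fv: "fst v = True" using adj_side[OF x(2)] by auto
        have "v \<notin> CL" using fv oCL unfolding onside_def by auto
        moreover have "v \<notin> nb c A CR" using fv onbR unfolding onside_def by auto
        ultimately have "v \<in> H" using vA vCR False unfolding H_def by auto
        then show ?thesis using xX x(2) unfolding nb_def by auto
      qed
    qed
    have f1: "finite (nb c A CL - CR)" using fin[OF nb_sub[of c A CL]] by simp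
    have f2: "finite (nb c H X)" by (rule fin) (use nb_sub[of c H X] HA in blast)
    have c1: "card (nb c A CL' - CR) \<le> 3 * card CL'"
    proof -
      have "card (nb c A CL' - CR) \<le> card ((nb c A CL - CR) \<union> nb c H X)"
        using card_mono[OF _ sub] f1 f2 by blast
      also have "\<dots> \<le> card (nb c A CL - CR) + card (nb c H X)" by (rule card_Un_le)
      also have "\<dots> \<le> 3 * card CL' " using nCL neg cCL' by linarith
      finally show ?thesis .
    qed
    have c2: "card (nb c A CR - CL') \<le> 3*card CR"
    proof -
      have "nb c A CR - CL' \<subseteq> nb c A CR - CL" unfolding CL'_def by auto
      then have "card (nb c A CR - CL') \<le> card (nb c A CR - CL)"
        by (rule card_mono[rotated]) (use fin[OF nb_sub[of c A CR]] in simp)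
      then show ?thesis using nCR by linarith
    qed
    have CL'sub: "CL' \<subseteq> A \<inter> Lv" unfolding CL'_def using CL X HA unfolding onside_def Lv_def by auto
    show False
    proof (cases "card CL' < m1")
      case True
      then have "bad (CL', CR)" unfolding bad_def using CL'sub CR cCR c1 c2 by auto
      then have "card CL' + card CR \<le> card CL + card CR" by (rule mx')
      then show False using cCL' X(3) by linarith
    next
      case False
      have "nb c A CL' \<subseteq> (nb c A CL' - CR) \<union> CR" by auto
      then have "card (nb c A CL') \<le> card ((nb c A CL' - CR) \<union> CR)"
        by (rule card_mono[rotated]) (use fin[OF nb_sub[of c A CL']] fCR in simp)
      also have "\<dots> \<le> card (nb c A CL' - CR) + card CR" by (rule card_Un_le)
      finally have "card (nb c A CL') \<le> card (nb c A CL' - CR) + card CR" .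
      then have cn: "card (nb c A CL') \<le> 3*m1 + 3*t + m2"
        using c1 cCL' cCL cCR X(4) by linarith
      define Y where "Y = (A \<inter> Rv) - nb c A CL'"
      have "card (A \<inter> Rv) - card (nb c A CL') \<le> card Y"
        unfolding Y_def by (rule card_diff_ge) (use fin nb_sub in blast)
      then have cY: "m2 \<le> card Y" using sR[unfolded distrib_left] cn unfolding Rv_def by linarith
      have oCL': "onside False CL'" using CL'sub unfolding onside_def Lv_def by auto
      have oY: "onside True Y" unfolding Y_def onside_def Rv_def by auto
      have "\<exists>x\<in>CL'. \<exists>y\<in>Y. adj c x y"
        apply (rule NK_D[OF NK _ _ oCL' oY])
        using CL'sub Ab Y_def cY False by auto
      then obtain x y where "x \<in> CL'" "y \<in> Y" "adj c x y" by blast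
      then have "y \<in> nb c A CL'" unfolding nb_def Y_def by auto
      then show False using \<open>y \<in> Y\<close> unfolding Y_def by auto
    qed
  qed
  have expR: "3*card X + 1 \<le> card (nb c H X)"
    if X: "X \<subseteq> H" "onside True X" "1 \<le> card X" "card X \<le> t" for X
  proof (rule ccontr)
    assume neg: "\<not> 3*card X + 1 \<le> card (nb c H X)"
    define CR' where "CR' = CR \<union> X"
    have disj: "CR \<inter> X = {}" using X(1) unfolding H_def by auto
    have fX: "finite X" using X(1) HA fin by blast
    have fCR: "finite CR" using CR fin by blast
    have fCL: "finite CL" using CL fin by blast
    have cCR': "card CR' = card CR + card X" unfolding CR'_def using disj fX fCR card_Un_disjoint by blast
    have sub: "nb c A CR' - CL \<subseteq> (nb c A CR - CL) \<union> nb c H X"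
    proof
      fix v assume v: "v \<in> nb c A CR' - CL"
      then obtain x where x: "x \<in> CR'" "adj c x v" and vA: "v \<in> A" and vCL: "v \<notin> CL"
        unfolding nb_def by auto
      show "v \<in> (nb c A CR - CL) \<union> nb c H X"
      proof (cases "v \<in> nb c A CR")
        case True then show ?thesis using vCL by auto
      next
        case False
        then have xX: "x \<in> X" using x vA unfolding CR'_def nb_def by auto
        then have "fst x = True" using X(2) unfolding onside_def by auto
        then have fv: "fst v = False" using adj_side[OF x(2)] by auto
        have "v \<notin> CR" using fv oCR unfolding onside_def by auto
        moreover have "v \<notin> nb c A CL" using fv onbL unfolding onside_def by auto
        ultimately have "v \<in> H" using vA vCL False unfolding H_def by auto
        then show ?thesis using xX x(2) unfolding nb_def by auto
      qed
    qed
    have f1: "finite (nb c A CR - CL)" using fin[OF nb_sub[of c A CR]] by simp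
    have f2: "finite (nb c H X)" by (rule fin) (use nb_sub[of c H X] HA in blast)
    have c1: "card (nb c A CR' - CL) \<le> 3 * card CR'"
    proof -
      have "card (nb c A CR' - CL) \<le> card ((nb c A CR - CL) \<union> nb c H X)"
        using card_mono[OF _ sub] f1 f2 by blast
      also have "\<dots> \<le> card (nb c A CR - CL) + card (nb c H X)" by (rule card_Un_le)
      also have "\<dots> \<le> 3 * card CR' " using nCR neg cCR' by linarith
      finally show ?thesis .
    qed
    have c2: "card (nb c A CL - CR') \<le> 3*card CL"
    proof -
      have "nb c A CL - CR' \<subseteq> nb c A CL - CR" unfolding CR'_def by auto
      then have "card (nb c A CL - CR') \<le> card (nb c A CL - CR)"
        by (rule card_mono[rotated]) (use fin[OF nb_sub[of c A CL]] in simp)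
      then show ?thesis using nCL by linarith
    qed
    have CR'sub: "CR' \<subseteq> A \<inter> Rv" unfolding CR'_def using CR X HA unfolding onside_def Rv_def by auto
    show False
    proof (cases "card CR' < m2")
      case True
      then have "bad (CL, CR')" unfolding bad_def using CR'sub CL cCL c1 c2 by auto
      then have "card CL + card CR' \<le> card CL + card CR" by (rule mx')
      then show False using cCR' X(3) by linarith
    next
      case False
      have "nb c A CR' \<subseteq> (nb c A CR' - CL) \<union> CL" by auto
      then have "card (nb c A CR') \<le> card ((nb c A CR' - CL) \<union> CL)"
        by (rule card_mono[rotated]) (use fin[OF nb_sub[of c A CR']] fCL in simp)
      also have "\<dots> \<le> card (nb c A CR' - CL) + card CL" by (rule card_Un_le)
      finally have "card (nb c A CR') \<le> card (nb c A CR' - CL) + card CL" .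
      then have cn: "card (nb c A CR') \<le> 3*m2 + 3*t + m1"
        using c1 cCR' cCL cCR X(4) by linarith
      define Y where "Y = (A \<inter> Lv) - nb c A CR'"
      have "card (A \<inter> Lv) - card (nb c A CR') \<le> card Y"
        unfolding Y_def by (rule card_diff_ge) (use fin nb_sub in blast)
      then have cY: "m1 \<le> card Y" using sL[unfolded distrib_left] cn unfolding Lv_def by linarith
      have oCR': "onside True CR'" using CR'sub unfolding onside_def Rv_def by auto
      have oY: "onside False Y" unfolding Y_def onside_def Lv_def by auto
      have "\<exists>x\<in>Y. \<exists>y\<in>CR'. adj c x y"
        apply (rule NK_D[OF NK _ _ oY oCR'])
        using CR'sub Ab Y_def cY False by auto
      then obtain x y where "x \<in> Y" "y \<in> CR'" "adj c x y" by blast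
      then have "adj c y x" using adj_sym by blast
      then have "x \<in> nb c A CR'" using \<open>x \<in> Y\<close> \<open>y \<in> CR'\<close> unfolding nb_def Y_def by auto
      then show False using \<open>x \<in> Y\<close> unfolding Y_def by auto
    qed
  qed
  have exp: "\<forall>X\<subseteq>H. \<forall>s. onside s X \<longrightarrow> 1 \<le> card X \<longrightarrow> card X \<le> t \<longrightarrow> 3*card X + 1 \<le> card (nb c H X)"
  proof (intro allI impI)
    fix X s assume "X \<subseteq> H" "onside s X" "1 \<le> card X" "card X \<le> t"
    then show "3*card X + 1 \<le> card (nb c H X)" using expL expR by (cases s) auto
  qed
  have sizeR: "card (A \<inter> Rv) \<le> card (H \<inter> Rv) + m2 + 3*m1"
  proof -
    have "A \<inter> Rv \<subseteq> (H \<inter> Rv) \<union> CR \<union> (nb c A CL - CR)"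
    proof
      fix v assume v: "v \<in> A \<inter> Rv"
      have "v \<notin> CL" using v oCL unfolding onside_def Rv_def by auto
      moreover have "v \<notin> nb c A CR" using v onbR unfolding onside_def Rv_def by auto
      ultimately show "v \<in> (H \<inter> Rv) \<union> CR \<union> (nb c A CL - CR)" using v unfolding H_def by auto
    qed
    then have "card (A \<inter> Rv) \<le> card ((H \<inter> Rv) \<union> CR \<union> (nb c A CL - CR))"
      by (rule card_mono[rotated]) (use fin[of H] fin[of CR] fin[OF nb_sub[of c A CL]] HA CR in auto)
    also have "\<dots> \<le> card (H \<inter> Rv) + card CR + card (nb c A CL - CR)"
      using card_Un_le[of "(H \<inter> Rv) \<union> CR" "nb c A CL - CR"] card_Un_le[of "H \<inter> Rv" CR] by linarith
    finally show ?thesis using cCR nCL cCL by linarith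
  qed
  have sizeL: "card (A \<inter> Lv) \<le> card (H \<inter> Lv) + m1 + 3*m2"
  proof -
    have "A \<inter> Lv \<subseteq> (H \<inter> Lv) \<union> CL \<union> (nb c A CR - CL)"
    proof
      fix v assume v: "v \<in> A \<inter> Lv"
      have "v \<notin> CR" using v oCR unfolding onside_def Lv_def by auto
      moreover have "v \<notin> nb c A CL" using v onbL unfolding onside_def Lv_def by auto
      ultimately show "v \<in> (H \<inter> Lv) \<union> CL \<union> (nb c A CR - CL)" using v unfolding H_def by auto
    qed
    then have "card (A \<inter> Lv) \<le> card ((H \<inter> Lv) \<union> CL \<union> (nb c A CR - CL))"
      by (rule card_mono[rotated]) (use fin[of H] fin[of CL] fin[OF nb_sub[of c A CR]] HA CL in auto)
    also have "\<dots> \<le> card (H \<inter> Lv) + card CL + card (nb c A CR - CL)"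
      using card_Un_le[of "(H \<inter> Lv) \<union> CL" "nb c A CR - CL"] card_Un_le[of "H \<inter> Lv" CL] by linarith
    finally show ?thesis using cCL nCR cCR by linarith
  qed
  show ?thesis using HA exp sizeR sizeL unfolding Rv_def Lv_def by blast
qed



lemma fewbad:
  assumes NK: "NK c b m1 m2" and Hb: "H \<subseteq> UNIV \<times> {..<b}" and fH: "finite H"
    and Zb: "Z \<subseteq> UNIV \<times> {..<b}" and fZ: "finite Z"
    and Z1: "\<forall>z\<in>Z. card (nb c H {z}) \<le> 1"
    and hR: "m1 + m2 \<le> card (H \<inter> {v. fst v})" and hL: "m1 + m2 \<le> card (H \<inter> {v. \<not> fst v})"
  shows "card (Z \<inter> {v. \<not> fst v}) < m1 \<and> card (Z \<inter> {v. fst v}) < m2"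
proof
  have nbU: "nb c H Z' = (\<Union>z\<in>Z'. nb c H {z})" for Z' unfolding nb_def by auto
  have cnb: "card (nb c H Z') \<le> card Z'" if "Z' \<subseteq> Z" for Z'
  proof -
    have fZ': "finite Z'" using that fZ finite_subset by blast
    have "card (nb c H Z') \<le> (\<Sum>z\<in>Z'. card (nb c H {z}))" by (subst nbU[of Z']) (rule card_UN_le[OF fZ'])
    also have "\<dots> \<le> (\<Sum>z\<in>Z'. 1)" by (rule sum_mono) (use Z1 that in auto)
    finally show ?thesis by simp
  qed
  have fnb: "finite (nb c H X)" for X by (rule finite_subset[OF nb_sub fH])
  show "card (Z \<inter> {v. \<not> fst v}) < m1"
  proof (rule ccontr)
    assume "\<not> card (Z \<inter> {v. \<not> fst v}) < m1"
    then have "m1 \<le> card (Z \<inter> {v. \<not> fst v})" by simp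
    then obtain Z' where Z': "Z' \<subseteq> Z \<inter> {v. \<not> fst v}" "card Z' = m1"
      by (blast elim: obtain_subset_with_card_n)
    define Y where "Y = (H \<inter> {v. fst v}) - nb c H Z'"
    have "card (H \<inter> {v. fst v}) - card (nb c H Z') \<le> card Y"
      unfolding Y_def by (rule card_diff_ge[OF fnb])
    moreover have "card (nb c H Z') \<le> m1" using cnb[of Z'] Z' by auto
    ultimately have cY: "m2 \<le> card Y" using hR by linarith
    have o1: "onside False Z'" using Z' unfolding onside_def by auto
    have o2: "onside True Y" unfolding Y_def onside_def by auto
    have "\<exists>x\<in>Z'. \<exists>y\<in>Y. adj c x y"
      by (rule NK_D[OF NK _ _ o1 o2]) (use Z' Zb Hb Y_def cY in auto)
    then obtain x y where "x \<in> Z'" "y \<in> Y" "adj c x y" by blast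
    then have "y \<in> nb c H Z'" unfolding nb_def Y_def by auto
    then show False using \<open>y \<in> Y\<close> unfolding Y_def by auto
  qed
  show "card (Z \<inter> {v. fst v}) < m2"
  proof (rule ccontr)
    assume "\<not> card (Z \<inter> {v. fst v}) < m2"
    then have "m2 \<le> card (Z \<inter> {v. fst v})" by simp
    then obtain Z' where Z': "Z' \<subseteq> Z \<inter> {v. fst v}" "card Z' = m2"
      by (blast elim: obtain_subset_with_card_n)
    define Y where "Y = (H \<inter> {v. \<not> fst v}) - nb c H Z'"
    have "card (H \<inter> {v. \<not> fst v}) - card (nb c H Z') \<le> card Y"
      unfolding Y_def by (rule card_diff_ge[OF fnb])
    moreover have "card (nb c H Z') \<le> m2" using cnb[of Z'] Z' by auto
    ultimately have cY: "m1 \<le> card Y" using hL by linarith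
    have o1: "onside True Z'" using Z' unfolding onside_def by auto
    have o2: "onside False Y" unfolding Y_def onside_def by auto
    have "\<exists>x\<in>Y. \<exists>y\<in>Z'. adj c x y"
      by (rule NK_D[OF NK _ _ o2 o1]) (use Z' Zb Hb Y_def cY in auto)
    then obtain x y where "x \<in> Y" "y \<in> Z'" "adj c x y" by blast
    then have "adj c y x" using adj_sym by blast
    then have "x \<in> nb c H Z'" using \<open>x \<in> Y\<close> \<open>y \<in> Z'\<close> unfolding nb_def Y_def by auto
    then show False using \<open>x \<in> Y\<close> unfolding Y_def by auto
  qed
qed

lemma sum_pow2: "(\<Sum>j<e. (2::nat)^j) + 1 = 2^e"
  by (induction e) auto

lemma fan:
  assumes exp: "\<forall>X\<subseteq>H. \<forall>s. onside s X \<longrightarrow> 1 \<le> card X \<longrightarrow> card X \<le> t \<longrightarrow> 3*card X + 1 \<le> card (nb c H X)"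
    and fH: "finite H" and pH: "p \<notin> H" and p2: "0 < d \<longrightarrow> 2 \<le> card (nb c H {p})"
    and tt: "\<forall>j. 0 < j \<longrightarrow> j < d \<longrightarrow> 2^j \<le> t"
  shows "\<exists>W. W 0 = {p} \<and> (\<forall>j\<le>d. card (W j) = 2^j) \<and> (\<forall>j\<le>d. 0 < j \<longrightarrow> W j \<subseteq> H)
     \<and> (\<forall>j<d. W (Suc j) \<subseteq> nb c H (W j)) \<and> (\<forall>j\<le>d. \<forall>j'\<le>d. j \<noteq> j' \<longrightarrow> W j \<inter> W j' = {})
     \<and> (\<forall>j\<le>d. onside (fst p \<noteq> odd j) (W j))"
proof -
  have "\<exists>W. W 0 = {p} \<and> (\<forall>j\<le>e. card (W j) = 2^j) \<and> (\<forall>j\<le>e. 0 < j \<longrightarrow> W j \<subseteq> H)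
     \<and> (\<forall>j<e. W (Suc j) \<subseteq> nb c H (W j)) \<and> (\<forall>j\<le>e. \<forall>j'\<le>e. j \<noteq> j' \<longrightarrow> W j \<inter> W j' = {})
     \<and> (\<forall>j\<le>e. onside (fst p \<noteq> odd j) (W j))" if "e \<le> d" for e
    using that
  proof (induction e)
    case 0
    show ?case by (rule exI[of _ "\<lambda>_. {p}"]) (auto simp: onside_def)
  next
    case (Suc e)
    then obtain W where W0: "W 0 = {p}" and Wc: "\<forall>j\<le>e. card (W j) = 2^j"
      and WH: "\<forall>j\<le>e. 0 < j \<longrightarrow> W j \<subseteq> H" and Ws: "\<forall>j<e. W (Suc j) \<subseteq> nb c H (W j)"
      and Wd: "\<forall>j\<le>e. \<forall>j'\<le>e. j \<noteq> j' \<longrightarrow> W j \<inter> W j' = {}"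
      and Wo: "\<forall>j\<le>e. onside (fst p \<noteq> odd j) (W j)" by auto
    define U where "U = (\<Union>j<e. W j)"
    define av where "av = nb c H (W e) - U"
    have fnb: "finite (nb c H X)" for X by (rule finite_subset[OF nb_sub fH])
    have disjWe: "nb c H (W e) \<inter> W e = {}"
      using nb_side[OF Wo[rule_format, of e]] Wo[rule_format, of e] unfolding onside_def by fastforce
    have av_eq: "av = nb c H (W e) - (\<Union>j\<le>e. W j)"
    proof -
      have "(\<Union>j\<le>e. W j) = U \<union> W e" unfolding U_def
        by (auto simp: le_less)
      then show ?thesis unfolding av_def using disjWe by auto
    qed
    have cav: "2^(Suc e) \<le> card av"
    proof (cases e)
      case 0
      have "av = nb c H {p}" unfolding av_def U_def 0 using W0 by auto
      then show ?thesis using p2 Suc.prems 0 by auto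
    next
      case (Suc e')
      have We: "W e \<subseteq> H" using WH Suc by auto
      have "1 \<le> card (W e)" using Wc by auto
      moreover have "card (W e) \<le> t"
      proof -
        have "0 < e" "e < d" using Suc Suc.prems by auto
        then have "2^e \<le> t" using tt by blast
        then show ?thesis using Wc by auto
      qed
      ultimately have c1: "3*card (W e) + 1 \<le> card (nb c H (W e))"
        using exp We Wo by blast
      have "card U \<le> (\<Sum>j<e. card (W j))" unfolding U_def by (rule card_UN_le) simp
      also have "\<dots> = (\<Sum>j<e. 2^j)" using Wc by (intro sum.cong) auto
      finally have cU: "card U + 1 \<le> 2^e" using sum_pow2[of e] by linarith
      have "card (nb c H (W e)) - card U \<le> card av"
        unfolding av_def
      proof (rule card_diff_ge)
        show "finite U" unfolding U_def
        proof (rule finite_UN_I)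
          fix x assume "x \<in> {..<e}"
          then have "card (W x) = 2^x" using Wc by auto
          then show "finite (W x)" by (intro card_ge_0_finite) simp
        qed simp
      qed
      moreover have "card (W e) = 2^e" using Wc by simp
      moreover have "(2::nat)^(Suc e) = 2*2^e" by simp
      ultimately show ?thesis using c1 cU by linarith
    qed
    then obtain S where S: "S \<subseteq> av" "card S = 2^(Suc e)" "finite S"
      by (rule obtain_subset_with_card_n)
    define W' where "W' = W(Suc e := S)"
    have SH: "S \<subseteq> H" using S nb_sub unfolding av_def by blast
    have Snb: "S \<subseteq> nb c H (W e)" using S unfolding av_def by blast
    have SU: "S \<inter> W j = {}" if "j \<le> e" for j using S that unfolding av_eq by auto
    have So: "onside (fst p \<noteq> odd (Suc e)) S"
      using nb_side[OF Wo[rule_format, of e]] Snb unfolding onside_def by auto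
    have W'a: "W' (Suc e) = S" unfolding W'_def by simp
    have W'b: "W' j = W j" if "j \<le> e" for j unfolding W'_def using that by simp
    have cs: "j = Suc e \<or> j \<le> e" if "j \<le> Suc e" for j using that by linarith
    show ?case
    proof (rule exI[of _ W'], intro conjI allI impI)
      show "W' 0 = {p}" using W'b[of 0] W0 by simp
    next
      fix j assume j: "j \<le> Suc e"
      show "card (W' j) = 2^j" using cs[OF j] W'a W'b Wc S by auto
    next
      fix j assume j: "j \<le> Suc e" "0 < j"
      show "W' j \<subseteq> H" using cs[OF j(1)] W'a W'b WH SH j(2) by auto
    next
      fix j assume j: "j < Suc e"
      then consider "j = e" | "j < e" by linarith
      then show "W' (Suc j) \<subseteq> nb c H (W' j)"
      proof cases
        case 1 then show ?thesis using W'a W'b[of e] Snb by simp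
      next
        case 2 then show ?thesis using W'b[of j] W'b[of "Suc j"] Ws by simp
      qed
    next
      fix j j' assume j: "j \<le> Suc e" and j': "j' \<le> Suc e" and ne: "j \<noteq> j'"
      show "W' j \<inter> W' j' = {}"
      proof (cases "j = Suc e")
        case True
        then have "j' \<le> e" using j' ne by linarith
        then show ?thesis using True W'a W'b SU by auto
      next
        case False
        then have jj: "j \<le> e" using j by linarith
        show ?thesis
        proof (cases "j' = Suc e")
          case True
          then show ?thesis using jj W'a W'b SU by auto
        next
          case False
          then have "j' \<le> e" using j' by linarith
          then show ?thesis using jj W'b Wd ne by simp
        qed
      qed
    next
      fix j assume j: "j \<le> Suc e"
      show "onside (fst p \<noteq> odd j) (W' j)" using cs[OF j] W'a W'b Wo So by auto
    qed
  qed
  from this[OF order_refl] show ?thesis .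
qed

lemma fan_path:
  assumes W0: "W 0 = {p}" and step: "\<forall>j<d. W (Suc j) \<subseteq> nb c H (W j)"
  shows "j \<le> d \<Longrightarrow> v \<in> W j \<Longrightarrow> \<exists>f. f 0 = p \<and> f j = v \<and> (\<forall>i\<le>j. f i \<in> W i) \<and> (\<forall>i<j. adj c (f i) (f (Suc i)))"
proof (induction j arbitrary: v)
  case 0
  then have "v = p" using W0 by simp
  then show ?case using W0 by (intro exI[of _ "\<lambda>_. p"]) simp
next
  case (Suc j)
  then have "v \<in> nb c H (W j)" using step[rule_format, of j] by auto
  then obtain u where u: "u \<in> W j" "adj c u v" unfolding nb_def by auto
  obtain f where f: "f 0 = p" "f j = u" "\<forall>i\<le>j. f i \<in> W i" "\<forall>i<j. adj c (f i) (f (Suc i))"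
    using Suc.IH[OF _ u(1)] Suc.prems by auto
  define g where "g = f(Suc j := v)"
  have g1: "g 0 = p" "g (Suc j) = v" unfolding g_def using f by auto
  have g2: "\<forall>i\<le>Suc j. g i \<in> W i"
  proof (intro allI impI)
    fix i assume "i \<le> Suc j"
    then consider "i = Suc j" | "i \<le> j" by linarith
    then show "g i \<in> W i"
    proof cases
      case 1 then show ?thesis using Suc.prems g1 by simp
    next
      case 2 then show ?thesis using f(3) unfolding g_def by simp
    qed
  qed
  have g3: "\<forall>i<Suc j. adj c (g i) (g (Suc i))"
  proof (intro allI impI)
    fix i assume "i < Suc j"
    then consider "i = j" | "i < j" by linarith
    then show "adj c (g i) (g (Suc i))"
    proof cases
      case 1 then show ?thesis using u f(2) unfolding g_def by simp
    next
      case 2 then show ?thesis using f(4) unfolding g_def by simp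
    qed
  qed
  show ?case using g1 g2 g3 by blast
qed



definition ispath :: "(nat \<Rightarrow> nat \<Rightarrow> nat) \<Rightarrow> (bool \<times> nat) list \<Rightarrow> bool" where
  "ispath c P \<longleftrightarrow> (\<forall>i. Suc i < length P \<longrightarrow> adj c (P!i) (P!Suc i))"

lemma ispath_snoc:
  assumes "ispath c P" and "P \<noteq> [] \<Longrightarrow> adj c (last P) u"
  shows "ispath c (P @ [u])"
  unfolding ispath_def
proof (intro allI impI)
  fix i assume i: "Suc i < length (P @ [u])"
  show "adj c ((P @ [u]) ! i) ((P @ [u]) ! Suc i)"
  proof (cases "Suc i < length P")
    case True
    then show ?thesis using assms(1) unfolding ispath_def by (simp add: nth_append)
  next
    case False
    then have si: "Suc i = length P" using i by simp
    then have "P \<noteq> []" by auto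
    moreover have "i = length P - 1" using si by simp
    ultimately have "last P = P ! i" by (simp add: last_conv_nth)
    then show ?thesis using si assms(2) \<open>P \<noteq> []\<close> by (simp add: nth_append)
  qed
qed

lemma ispath_butlast: "ispath c P \<Longrightarrow> ispath c (butlast P)"
  unfolding ispath_def by (simp add: nth_butlast)

lemma ispath_single: "ispath c [u]"
  unfolding ispath_def by simp

lemma dfs:
  assumes NK: "NK c b m1 m2" and Bb: "B \<subseteq> UNIV \<times> {..<b}" and fB: "finite B"
    and sL: "N + 2*m1 \<le> card (B \<inter> {v. \<not> fst v})" and sR: "N + 2*m2 \<le> card (B \<inter> {v. fst v})"
  shows "\<exists>Q. distinct Q \<and> set Q \<subseteq> B \<and> ispath c Q \<and> N \<le> length Q"
proof -
  define Lv where "Lv = {v::bool\<times>nat. \<not> fst v}"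
  define Rv where "Rv = {v::bool\<times>nat. fst v}"
  define inv where "inv S P U \<longleftrightarrow> S \<union> set P \<union> U = B \<and> S \<inter> set P = {} \<and> S \<inter> U = {} \<and> set P \<inter> U = {}
     \<and> distinct P \<and> ispath c P \<and> (\<forall>x\<in>S. \<forall>y\<in>U. \<not> adj c x y)
     \<and> card (S \<inter> Lv) \<le> m1 \<and> card (S \<inter> Rv) \<le> m2" for S P U
  define concl where "concl \<longleftrightarrow> (\<exists>Q. distinct Q \<and> set Q \<subseteq> B \<and> ispath c Q \<and> N \<le> length Q)"
  have fin: "finite X" if "X \<subseteq> B" for X using fB that finite_subset by blast
  have key: "inv S P U \<Longrightarrow> concl" for S P U
  proof (induction "2*card U + length P" arbitrary: S P U rule: less_induct)
    case less
    have I: "S \<union> set P \<union> U = B" "S \<inter> set P = {}" "S \<inter> U = {}" "set P \<inter> U = {}"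
      "distinct P" "ispath c P" "\<forall>x\<in>S. \<forall>y\<in>U. \<not> adj c x y"
      "card (S \<inter> Lv) \<le> m1" "card (S \<inter> Rv) \<le> m2"
      using less.prems unfolding inv_def by auto
    have fU: "finite U" using I(1) fin by blast
    have fS: "finite S" using I(1) fin by blast
    have lenP: "card (set P) = length P" using I(5) by (rule distinct_card)
    show concl
    proof (cases "m1 \<le> card (S \<inter> Lv)")
      case True
      have cU: "card (U \<inter> Rv) < m2"
      proof (rule ccontr)
        assume "\<not> card (U \<inter> Rv) < m2"
        then have "m2 \<le> card (U \<inter> Rv)" by simp
        have o1: "onside False (S \<inter> Lv)" unfolding onside_def Lv_def by auto
        have o2: "onside True (U \<inter> Rv)" unfolding onside_def Rv_def by auto
        have "\<exists>x\<in>S \<inter> Lv. \<exists>y\<in>U \<inter> Rv. adj c x y"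
          by (rule NK_D[OF NK _ _ o1 o2]) (use I(1) Bb True \<open>m2 \<le> card (U \<inter> Rv)\<close> in auto)
        then show False using I(7) by blast
      qed
      have "B \<inter> Rv \<subseteq> (S \<inter> Rv) \<union> set P \<union> (U \<inter> Rv)" using I(1) by auto
      then have "card (B \<inter> Rv) \<le> card ((S \<inter> Rv) \<union> set P \<union> (U \<inter> Rv))"
        by (rule card_mono[rotated]) (use fS fU in auto)
      also have "\<dots> \<le> card (S \<inter> Rv) + card (set P) + card (U \<inter> Rv)"
        using card_Un_le[of "(S \<inter> Rv) \<union> set P" "U \<inter> Rv"] card_Un_le[of "S \<inter> Rv" "set P"] by linarith
      finally have "N \<le> length P" using sR I(9) cU lenP unfolding Rv_def by linarith
      then show ?thesis unfolding concl_def using I(1,5,6) by blast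
    next
      case F1: False
      show concl
      proof (cases "m2 \<le> card (S \<inter> Rv)")
        case True
        have cU: "card (U \<inter> Lv) < m1"
        proof (rule ccontr)
          assume "\<not> card (U \<inter> Lv) < m1"
          then have "m1 \<le> card (U \<inter> Lv)" by simp
          have o1: "onside False (U \<inter> Lv)" unfolding onside_def Lv_def by auto
          have o2: "onside True (S \<inter> Rv)" unfolding onside_def Rv_def by auto
          have "\<exists>x\<in>U \<inter> Lv. \<exists>y\<in>S \<inter> Rv. adj c x y"
            by (rule NK_D[OF NK _ _ o1 o2]) (use I(1) Bb True \<open>m1 \<le> card (U \<inter> Lv)\<close> in auto)
          then show False using I(7) adj_sym by blast
        qed
        have "B \<inter> Lv \<subseteq> (S \<inter> Lv) \<union> set P \<union> (U \<inter> Lv)" using I(1) by auto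
        then have "card (B \<inter> Lv) \<le> card ((S \<inter> Lv) \<union> set P \<union> (U \<inter> Lv))"
          by (rule card_mono[rotated]) (use fS fU in auto)
        also have "\<dots> \<le> card (S \<inter> Lv) + card (set P) + card (U \<inter> Lv)"
          using card_Un_le[of "(S \<inter> Lv) \<union> set P" "U \<inter> Lv"] card_Un_le[of "S \<inter> Lv" "set P"] by linarith
        finally have "N \<le> length P" using sL I(8) cU lenP unfolding Lv_def by linarith
        then show ?thesis unfolding concl_def using I(1,5,6) by blast
      next
        case F2: False
        show concl
        proof (cases "P = []")
          case True
          have "U \<noteq> {}"
          proof
            assume "U = {}"
            then have "S = B" using I(1) True by auto
            then show False using F1 sL unfolding Lv_def by auto
          qed
          then obtain u where u: "u \<in> U" by blast
          have iv: "inv S [u] (U - {u})"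
            unfolding inv_def using I u True ispath_single by auto
          moreover have ms: "2*card (U - {u}) + length [u] < 2*card U + length P"
          proof -
            have "card U \<ge> 1" using u fU by (metis One_nat_def Suc_leI card_gt_0_iff empty_iff)
            then show ?thesis using u fU by (simp add: card_Diff_singleton)
          qed
          show ?thesis by (rule less.hyps[OF ms iv])
        next
          case Pne: False
          define x where "x = last P"
          have xP: "x \<in> set P" unfolding x_def using Pne by simp
          show ?thesis
          proof (cases "\<exists>u\<in>U. adj c x u")
            case True
            then obtain u where u: "u \<in> U" "adj c x u" by blast
            have uP: "u \<notin> set P" using u I(4) by auto
            have iv: "inv S (P @ [u]) (U - {u})"
              unfolding inv_def
              using I u uP ispath_snoc[OF I(6), of u] x_def by auto
            moreover have ms: "2*card (U - {u}) + length (P @ [u]) < 2*card U + length P"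
            proof -
              have "card U \<ge> 1" using u fU by (metis One_nat_def Suc_leI card_gt_0_iff empty_iff)
              then show ?thesis using u fU by (simp add: card_Diff_singleton)
            qed
            show ?thesis by (rule less.hyps[OF ms iv])
          next
            case False
            have Pd: "butlast P @ [x] = P" using append_butlast_last_id[OF Pne] unfolding x_def .
            have "set P = set (butlast P @ [x])" using Pd by simp
            then have Peq: "set P = insert x (set (butlast P))" by simp
            have "distinct (butlast P @ [x])" using I(5) Pd by simp
            then have xnb: "x \<notin> set (butlast P)" by simp
            have cL: "card ((S \<union> {x}) \<inter> Lv) \<le> m1"
            proof -
              have "(S \<union> {x}) \<inter> Lv \<subseteq> insert x (S \<inter> Lv)" by auto
              then have "card ((S \<union> {x}) \<inter> Lv) \<le> card (insert x (S \<inter> Lv))"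
                by (rule card_mono[rotated]) (use fS in auto)
              also have "\<dots> \<le> Suc (card (S \<inter> Lv))" by (rule card_insert_le_m1) auto
              finally show ?thesis using F1 by linarith
            qed
            have cR: "card ((S \<union> {x}) \<inter> Rv) \<le> m2"
            proof -
              have "(S \<union> {x}) \<inter> Rv \<subseteq> insert x (S \<inter> Rv)" by auto
              then have "card ((S \<union> {x}) \<inter> Rv) \<le> card (insert x (S \<inter> Rv))"
                by (rule card_mono[rotated]) (use fS in auto)
              also have "\<dots> \<le> Suc (card (S \<inter> Rv))" by (rule card_insert_le_m1) auto
              finally show ?thesis using F2 by linarith
            qed
            have iv: "inv (S \<union> {x}) (butlast P) U"
              unfolding inv_def
            proof (intro conjI)
              show "S \<union> {x} \<union> set (butlast P) \<union> U = B" using I(1) Peq by auto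
              show "(S \<union> {x}) \<inter> set (butlast P) = {}" using I(2) Peq xnb by auto
              show "(S \<union> {x}) \<inter> U = {}" using I(3,4) xP by auto
              show "set (butlast P) \<inter> U = {}" using I(4) Peq by auto
              show "distinct (butlast P)" using I(5) by (rule distinct_butlast)
              show "ispath c (butlast P)" using I(6) by (rule ispath_butlast)
              show "\<forall>xa\<in>S \<union> {x}. \<forall>y\<in>U. \<not> adj c xa y" using I(7) False by auto
              show "card ((S \<union> {x}) \<inter> Lv) \<le> m1" by (rule cL)
              show "card ((S \<union> {x}) \<inter> Rv) \<le> m2" by (rule cR)
            qed
            moreover have ms: "2*card U + length (butlast P) < 2*card U + length P" using Pne by simp
            show ?thesis by (rule less.hyps[OF ms iv])
          qed
        qed
      qed
    qed
  qed
  have "inv {} [] B" unfolding inv_def Lv_def Rv_def ispath_def by auto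
  then have concl by (rule key)
  then show ?thesis unfolding concl_def .
qed



lemma ispath_side:
  assumes "ispath c Q" shows "i + j < length Q \<Longrightarrow> fst (Q!(i+j)) = (fst (Q!i) \<noteq> odd j)"
proof (induction j)
  case 0 then show ?case by simp
next
  case (Suc j)
  then have "fst (Q!(i+j)) = (fst (Q!i) \<noteq> odd j)" by simp
  moreover have "adj c (Q!(i+j)) (Q!Suc (i+j))" using assms Suc.prems unfolding ispath_def by simp
  ultimately show ?case using adj_side by fastforce
qed

lemma adj_R: "adj c x y \<Longrightarrow> fst x \<Longrightarrow> c (snd y) (snd x) = 1"
  unfolding adj_def by simp

lemma adj_L: "adj c x y \<Longrightarrow> \<not> fst x \<Longrightarrow> c (snd x) (snd y) = 1"
  unfolding adj_def by simp

lemma gsides: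
  assumes ad: "\<forall>k. Suc k < n \<longrightarrow> adj c (g k) (g (Suc k))"
  shows "j < n \<Longrightarrow> fst (g j) = (fst (g 0) \<noteq> odd j)"
proof (induction j)
  case 0 then show ?case by simp
next
  case (Suc j)
  then have "fst (g j) = (fst (g 0) \<noteq> odd j)" by simp
  moreover have "adj c (g j) (g (Suc j))" using ad Suc.prems by simp
  ultimately show ?case using adj_side by fastforce
qed

lemma cyc_left:
  assumes n: "even n" "2 \<le> n" and inj: "inj_on g {..<n}" and sb: "\<forall>k<n. snd (g k) < b"
    and ad: "\<forall>k. Suc k < n \<longrightarrow> adj c (g k) (g (Suc k))" and cl: "adj c (g (n-1)) (g 0)"
    and g0: "fst (g 0) = False"
  shows "has_cycle_copy b c 1 n"
proof -
  define k where "k = n div 2"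
  have nk: "n = 2*k" using n unfolding k_def by simp
  have sd: "fst (g j) = odd j" if "j < n" for j using gsides[OF ad that] g0 by simp
  define a where "a i = snd (g (2*i))" for i
  define d where "d i = snd (g (2*i+1))" for i
  have ia: "inj_on a {..<k}"
  proof
    fix i i' assume i: "i \<in> {..<k}" and i': "i' \<in> {..<k}" and e: "a i = a i'"
    have "fst (g (2*i)) = fst (g (2*i'))" using sd[of "2*i"] sd[of "2*i'"] i i' nk by simp
    then have "g (2*i) = g (2*i')" using e unfolding a_def by (simp add: prod_eq_iff)
    moreover have "2*i \<in> {..<n}" "2*i' \<in> {..<n}" using i i' nk by auto
    ultimately have "2*i = 2*i'" using inj_onD[OF inj] by blast
    then show "i = i'" by simp
  qed
  have id: "inj_on d {..<k}"
  proof
    fix i i' assume i: "i \<in> {..<k}" and i': "i' \<in> {..<k}" and e: "d i = d i'"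
    have "fst (g (2*i+1)) = fst (g (2*i'+1))" using sd[of "2*i+1"] sd[of "2*i'+1"] i i' nk by simp
    then have "g (2*i+1) = g (2*i'+1)" using e unfolding d_def by (simp add: prod_eq_iff)
    moreover have "2*i+1 \<in> {..<n}" "2*i'+1 \<in> {..<n}" using i i' nk by auto
    ultimately have "2*i+1 = 2*i'+1" using inj_onD[OF inj] by blast
    then show "i = i'" by simp
  qed
  have ra: "a ` {..<k} \<subseteq> {..<b}" using sb nk unfolding a_def by auto
  have rd: "d ` {..<k} \<subseteq> {..<b}" using sb nk unfolding d_def by auto
  have e1: "c (a i) (d i) = 1" if i: "i < k" for i
  proof -
    have "adj c (g (2*i)) (g (Suc (2*i)))" using ad i nk by simp
    moreover have "\<not> fst (g (2*i))" using sd[of "2*i"] i nk by simp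
    ultimately have "c (snd (g (2*i))) (snd (g (Suc (2*i)))) = 1" by (rule adj_L)
    then show ?thesis unfolding a_def d_def by simp
  qed
  have e2: "c (a ((i + 1) mod k)) (d i) = 1" if i: "i < k" for i
  proof (cases "i + 1 < k")
    case True
    have "adj c (g (2*i+1)) (g (Suc (2*i+1)))" using ad True nk by simp
    moreover have "fst (g (2*i+1))" using sd[of "2*i+1"] i nk by simp
    ultimately have cc: "c (snd (g (Suc (2*i+1)))) (snd (g (2*i+1))) = 1" by (rule adj_R)
    have m: "(i + 1) mod k = i + 1" using True by simp
    have "a ((i+1) mod k) = snd (g (Suc (2*i+1)))" unfolding a_def m by simp
    then show ?thesis using cc unfolding d_def by simp
  next
    case False
    then have ik: "i + 1 = k" using i by simp
    then have "2*i+1 = n - 1" using nk by simp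
    then have "adj c (g (2*i+1)) (g 0)" using cl by simp
    moreover have "fst (g (2*i+1))" using sd[of "2*i+1"] i nk by simp
    ultimately have "c (snd (g 0)) (snd (g (2*i+1))) = 1" by (rule adj_R)
    then show ?thesis using ik unfolding a_def d_def by simp
  qed
  show ?thesis unfolding has_cycle_copy_def
    apply (rule exI[of _ a], rule exI[of _ d])
    using ia id ra rd e1 e2 unfolding k_def by blast
qed

lemma cyc_to_copy:
  assumes n: "even n" "2 \<le> n" and inj: "inj_on g {..<n}" and sb: "\<forall>k<n. snd (g k) < b"
    and ad: "\<forall>k. Suc k < n \<longrightarrow> adj c (g k) (g (Suc k))" and cl: "adj c (g (n-1)) (g 0)"
  shows "has_cycle_copy b c 1 n"
proof (cases "fst (g 0)")
  case False
  then show ?thesis using cyc_left[OF n inj sb ad cl] by simp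
next
  case True
  define g' where "g' j = g (Suc j mod n)" for j
  have inj': "inj_on g' {..<n}"
  proof
    fix x y assume x: "x \<in> {..<n}" and y: "y \<in> {..<n}" and e: "g' x = g' y"
    have "Suc x mod n \<in> {..<n}" "Suc y mod n \<in> {..<n}" using n by auto
    then have "Suc x mod n = Suc y mod n" using inj e unfolding g'_def inj_on_def by blast
    moreover have "Suc x mod n = (if Suc x = n then 0 else Suc x)" using x by auto
    moreover have "Suc y mod n = (if Suc y = n then 0 else Suc y)" using y by auto
    ultimately show "x = y" by (auto split: if_splits)
  qed
  have sb': "\<forall>k<n. snd (g' k) < b" using sb n unfolding g'_def by auto
  have ad': "\<forall>k. Suc k < n \<longrightarrow> adj c (g' k) (g' (Suc k))"
  proof (intro allI impI)
    fix k assume k: "Suc k < n"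
    show "adj c (g' k) (g' (Suc k))"
    proof (cases "Suc (Suc k) < n")
      case True
      then show ?thesis using ad k unfolding g'_def by simp
    next
      case False
      then have nn: "Suc (Suc k) = n" using k by simp
      then have "n - 1 = Suc k" by simp
      then have "adj c (g (Suc k)) (g 0)" using cl by simp
      moreover have "g' k = g (Suc k)" unfolding g'_def using k by simp
      moreover have "g' (Suc k) = g 0" unfolding g'_def using nn by simp
      ultimately show ?thesis by simp
    qed
  qed
  have cl': "adj c (g' (n-1)) (g' 0)"
  proof -
    have "g' (n-1) = g 0" unfolding g'_def using n by simp
    moreover have "g' 0 = g 1" unfolding g'_def using n by simp
    ultimately show ?thesis using ad n by simp
  qed
  have "fst (g' 0) = False"
  proof -
    have "g' 0 = g 1" unfolding g'_def using n by simp
    moreover have "fst (g 1) = (fst (g 0) \<noteq> odd (1::nat))" using gsides[OF ad, of 1] n by simp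
    ultimately show ?thesis using True by simp
  qed
  then have "has_cycle_copy b c 1 n" using cyc_left[OF n inj' sb' ad' cl'] by simp
  then show ?thesis .
qed



lemma cardR: "card ((UNIV \<times> A) \<inter> {v. fst v}) = card A"
proof -
  have "(UNIV \<times> A) \<inter> {v. fst v} = Pair True ` A" by auto
  moreover have "inj_on (Pair True) A" by (auto simp: inj_on_def)
  ultimately show ?thesis by (simp add: card_image)
qed

lemma cardL: "card ((UNIV \<times> A) \<inter> {v. \<not> fst v}) = card A"
proof -
  have "(UNIV \<times> A) \<inter> {v. \<not> fst v} = Pair False ` A" by auto
  moreover have "inj_on (Pair False) A" by (auto simp: inj_on_def)
  ultimately show ?thesis by (simp add: card_image)
qed

lemma card_split:
  assumes "finite Z" shows "card Z = card (Z \<inter> {v. \<not> fst v}) + card (Z \<inter> {v. fst v})"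
proof -
  have "Z = (Z \<inter> {v. \<not> fst v}) \<union> (Z \<inter> {v. fst v})" by auto
  moreover have "(Z \<inter> {v. \<not> fst v}) \<inter> (Z \<inter> {v. fst v}) = {}" by auto
  ultimately show ?thesis using assms card_Un_disjoint
    by (metis finite_Int)
qed



lemma main_cycle:
  assumes NK: "NK c b m1 m2" and m: "0 < m1" "0 < m2"
    and bb: "32*m1 + 49*m2 \<le> b"
    and d1: "m1 \<le> 2^d1" "\<forall>j<d1. 2^j < m1" and d2: "m2 \<le> 2^d2" "\<forall>j<d2. 2^j < m2"
    and n: "d1 + d2 + 1 \<le> n" "even n" "n \<le> m2"
  shows "has_cycle_copy b c 1 n"
proof -
  define s where "s = 6*m1 + 6*m2"
  define t where "t = m1 + m2"
  define V1 where "V1 = (UNIV::bool set) \<times> {..<s}"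
  define V2 where "V2 = (UNIV::bool set) \<times> {s..<2*s}"
  define VB where "VB = (UNIV::bool set) \<times> {2*s..<b}"
  define lam where "lam = n - 1 - d1 - d2"
  have nlam: "n = d1 + lam + d2 + 1" using n by (simp add: lam_def)
  have n2: "2 \<le> n"
  proof -
    have "n \<noteq> 1" using n(2) by auto
    then show ?thesis using n(1) by linarith
  qed
  have d2pos: "0 < d2"
  proof (rule ccontr)
    assume "\<not> 0 < d2"
    then have "m2 \<le> 1" using d2 by simp
    then show False using n2 n(3) by linarith
  qed
  have lamb: "lam + 1 \<le> m2" using nlam n(3) by linarith
  have sb2: "2*s \<le> b" using bb s_def by linarith
  have V1b: "V1 \<subseteq> UNIV \<times> {..<b}" unfolding V1_def using sb2 by auto
  have V2b: "V2 \<subseteq> UNIV \<times> {..<b}" unfolding V2_def using sb2 by auto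
  have VBb: "VB \<subseteq> UNIV \<times> {..<b}" unfolding VB_def by auto
  have fV1: "finite V1" unfolding V1_def by simp
  have fV2: "finite V2" unfolding V2_def by simp
  have fVB: "finite VB" unfolding VB_def by simp
  have dj1B: "V1 \<inter> VB = {}" unfolding V1_def VB_def by auto
  have dj2B: "V2 \<inter> VB = {}" unfolding V2_def VB_def by auto
  have dj12: "V1 \<inter> V2 = {}" unfolding V1_def V2_def by auto
  have cV1R: "card (V1 \<inter> {v. fst v}) = s" unfolding V1_def cardR by simp
  have cV1L: "card (V1 \<inter> {v. \<not> fst v}) = s" unfolding V1_def cardL by simp
  have cV2R: "card (V2 \<inter> {v. fst v}) = s" unfolding V2_def cardR by simp
  have cV2L: "card (V2 \<inter> {v. \<not> fst v}) = s" unfolding V2_def cardL by simp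
  have cVBR: "card (VB \<inter> {v. fst v}) = b - 2*s" unfolding VB_def cardR by simp
  have cVBL: "card (VB \<inter> {v. \<not> fst v}) = b - 2*s" unfolding VB_def cardL by simp
  have p1a: "3*(m1+t) + 2*m2 \<le> card (V1 \<inter> {v. fst v})" unfolding cV1R s_def t_def by simp
  have p1b: "3*(m2+t) + 2*m1 \<le> card (V1 \<inter> {v. \<not> fst v})" unfolding cV1L s_def t_def by simp
  obtain H1 where H1: "H1 \<subseteq> V1"
    and exp1: "\<forall>X\<subseteq>H1. \<forall>s. onside s X \<longrightarrow> 1 \<le> card X \<longrightarrow> card X \<le> t \<longrightarrow> 3*card X + 1 \<le> card (nb c H1 X)"
    and z1R: "card (V1 \<inter> {v. fst v}) \<le> card (H1 \<inter> {v. fst v}) + m2 + 3*m1"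
    and z1L: "card (V1 \<inter> {v. \<not> fst v}) \<le> card (H1 \<inter> {v. \<not> fst v}) + m1 + 3*m2"
    using prune[OF NK V1b fV1 m p1a p1b] by blast
  have p2a: "3*(m1+t) + 2*m2 \<le> card (V2 \<inter> {v. fst v})" unfolding cV2R s_def t_def by simp
  have p2b: "3*(m2+t) + 2*m1 \<le> card (V2 \<inter> {v. \<not> fst v})" unfolding cV2L s_def t_def by simp
  obtain H2 where H2: "H2 \<subseteq> V2"
    and exp2: "\<forall>X\<subseteq>H2. \<forall>s. onside s X \<longrightarrow> 1 \<le> card X \<longrightarrow> card X \<le> t \<longrightarrow> 3*card X + 1 \<le> card (nb c H2 X)"
    and z2R: "card (V2 \<inter> {v. fst v}) \<le> card (H2 \<inter> {v. fst v}) + m2 + 3*m1"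
    and z2L: "card (V2 \<inter> {v. \<not> fst v}) \<le> card (H2 \<inter> {v. \<not> fst v}) + m1 + 3*m2"
    using prune[OF NK V2b fV2 m p2a p2b] by blast
  have fH1: "finite H1" using H1 fV1 finite_subset by blast
  have fH2: "finite H2" using H2 fV2 finite_subset by blast
  have H1b: "H1 \<subseteq> UNIV \<times> {..<b}" using H1 V1b by blast
  have H2b: "H2 \<subseteq> UNIV \<times> {..<b}" using H2 V2b by blast
  have h1R: "m1 + m2 \<le> card (H1 \<inter> {v. fst v})" using z1R cV1R using s_def by linarith
  have h1L: "m1 + m2 \<le> card (H1 \<inter> {v. \<not> fst v})" using z1L cV1L using s_def by linarith
  have h2R: "m1 + m2 \<le> card (H2 \<inter> {v. fst v})" using z2R cV2R using s_def by linarith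
  have h2L: "m1 + m2 \<le> card (H2 \<inter> {v. \<not> fst v})" using z2L cV2L using s_def by linarith
  have q1: "(2*m1 + 3*m2) + 2*m1 \<le> card (VB \<inter> {v. \<not> fst v})" using cVBL bb using s_def by linarith
  have q2: "(2*m1 + 3*m2) + 2*m2 \<le> card (VB \<inter> {v. fst v})" using cVBR bb using s_def by linarith
  obtain Q where Qd: "distinct Q" and QB: "set Q \<subseteq> VB" and Qp: "ispath c Q" and Ql: "2*m1 + 3*m2 \<le> length Q"
    using dfs[OF NK VBb fVB q1 q2] by blast
  define Z1 where "Z1 = {v \<in> VB. card (nb c H1 {v}) \<le> 1}"
  define Z2 where "Z2 = {v \<in> VB. card (nb c H2 {v}) \<le> 1}"
  have fZ1: "finite Z1" using fVB unfolding Z1_def by simp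
  have fZ2: "finite Z2" using fVB unfolding Z2_def by simp
  have Z1b: "Z1 \<subseteq> UNIV \<times> {..<b}" using VBb unfolding Z1_def by auto
  have Z2b: "Z2 \<subseteq> UNIV \<times> {..<b}" using VBb unfolding Z2_def by auto
  have "card (Z1 \<inter> {v. \<not> fst v}) < m1 \<and> card (Z1 \<inter> {v. fst v}) < m2"
    by (rule fewbad[OF NK H1b fH1 Z1b fZ1 _ h1R h1L]) (simp add: Z1_def)
  then have cZ1: "card Z1 + 2 \<le> m1 + m2" using card_split[OF fZ1] by linarith
  have "card (Z2 \<inter> {v. \<not> fst v}) < m1 \<and> card (Z2 \<inter> {v. fst v}) < m2"
    by (rule fewbad[OF NK H2b fH2 Z2b fZ2 _ h2R h2L]) (simp add: Z2_def)
  then have cZ2: "card Z2 + 2 \<le> m1 + m2" using card_split[OF fZ2] by linarith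
  define I where "I = {..<length Q - lam}"
  define B1 where "B1 = {i \<in> I. Q!i \<in> Z1}"
  define B2 where "B2 = {i \<in> I. Q!(i+lam) \<in> Z2}"
  have cB1: "card B1 \<le> card Z1"
  proof (rule card_inj_on_le[of "\<lambda>i. Q!i"])
    show "inj_on (\<lambda>i. Q!i) B1" unfolding B1_def I_def inj_on_def using Qd
      by (auto simp: nth_eq_iff_index_eq)
    show "(\<lambda>i. Q!i) ` B1 \<subseteq> Z1" unfolding B1_def by auto
  qed (rule fZ1)
  have cB2: "card B2 \<le> card Z2"
  proof (rule card_inj_on_le[of "\<lambda>i. Q!(i+lam)"])
    show "inj_on (\<lambda>i. Q!(i+lam)) B2" unfolding B2_def I_def inj_on_def using Qd
      by (auto simp: nth_eq_iff_index_eq)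
    show "(\<lambda>i. Q!(i+lam)) ` B2 \<subseteq> Z2" unfolding B2_def by auto
  qed (rule fZ2)
  have "\<not> I \<subseteq> B1 \<union> B2"
  proof
    assume "I \<subseteq> B1 \<union> B2"
    then have "card I \<le> card (B1 \<union> B2)" by (rule card_mono[rotated]) (simp add: B1_def B2_def I_def)
    also have "\<dots> \<le> card B1 + card B2" by (rule card_Un_le)
    finally have "card I \<le> card B1 + card B2" .
    moreover have "card I = length Q - lam" unfolding I_def by simp
    ultimately show False using cB1 cB2 cZ1 cZ2 Ql lamb by linarith
  qed
  then obtain i where iI: "i \<in> I" and iB1: "i \<notin> B1" and iB2: "i \<notin> B2" by blast
  have il: "i + lam < length Q" using iI unfolding I_def by simp
  define p where "p = Q!i"
  define q where "q = Q!(i+lam)"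
  have pVB: "p \<in> VB" using QB il unfolding p_def by auto
  have qVB: "q \<in> VB" using QB il unfolding q_def by auto
  have pZ: "2 \<le> card (nb c H1 {p})" using iB1 iI pVB unfolding B1_def Z1_def p_def by auto
  have qZ: "2 \<le> card (nb c H2 {q})" using iB2 iI qVB unfolding B2_def Z2_def q_def by auto
  have pH1: "p \<notin> H1" using pVB H1 dj1B by blast
  have qH2: "q \<notin> H2" using qVB H2 dj2B by blast
  have tt1: "\<forall>j. 0 < j \<longrightarrow> j < d1 \<longrightarrow> 2^j \<le> t" using d1(2) unfolding t_def
    by (metis less_imp_le_nat trans_le_add1)
  have tt2: "\<forall>j. 0 < j \<longrightarrow> j < d2 \<longrightarrow> 2^j \<le> t" using d2(2) unfolding t_def
    by (metis less_imp_le_nat trans_le_add2)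
  have pZ': "0 < d1 \<longrightarrow> 2 \<le> card (nb c H1 {p})" using pZ by simp
  have qZ': "0 < d2 \<longrightarrow> 2 \<le> card (nb c H2 {q})" using qZ by simp
  from fan[OF exp1 fH1 pH1 pZ' tt1] obtain W1 where W1all: "W1 0 = {p} \<and> (\<forall>j\<le>d1. card (W1 j) = 2^j) \<and> (\<forall>j\<le>d1. 0 < j \<longrightarrow> W1 j \<subseteq> H1)
     \<and> (\<forall>j<d1. W1 (Suc j) \<subseteq> nb c H1 (W1 j)) \<and> (\<forall>j\<le>d1. \<forall>j'\<le>d1. j \<noteq> j' \<longrightarrow> W1 j \<inter> W1 j' = {})
     \<and> (\<forall>j\<le>d1. onside (fst p \<noteq> odd j) (W1 j))" by (rule exE)
  note W10 = W1all[THEN conjunct1]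
  note W1c = W1all[THEN conjunct2, THEN conjunct1]
  note W1H = W1all[THEN conjunct2, THEN conjunct2, THEN conjunct1]
  note W1s = W1all[THEN conjunct2, THEN conjunct2, THEN conjunct2, THEN conjunct1]
  note W1d = W1all[THEN conjunct2, THEN conjunct2, THEN conjunct2, THEN conjunct2, THEN conjunct1]
  note W1o = W1all[THEN conjunct2, THEN conjunct2, THEN conjunct2, THEN conjunct2, THEN conjunct2]
  from fan[OF exp2 fH2 qH2 qZ' tt2] obtain W2 where W2all: "W2 0 = {q} \<and> (\<forall>j\<le>d2. card (W2 j) = 2^j) \<and> (\<forall>j\<le>d2. 0 < j \<longrightarrow> W2 j \<subseteq> H2)
     \<and> (\<forall>j<d2. W2 (Suc j) \<subseteq> nb c H2 (W2 j)) \<and> (\<forall>j\<le>d2. \<forall>j'\<le>d2. j \<noteq> j' \<longrightarrow> W2 j \<inter> W2 j' = {})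
     \<and> (\<forall>j\<le>d2. onside (fst q \<noteq> odd j) (W2 j))" by (rule exE)
  note W20 = W2all[THEN conjunct1]
  note W2c = W2all[THEN conjunct2, THEN conjunct1]
  note W2H = W2all[THEN conjunct2, THEN conjunct2, THEN conjunct1]
  note W2s = W2all[THEN conjunct2, THEN conjunct2, THEN conjunct2, THEN conjunct1]
  note W2d = W2all[THEN conjunct2, THEN conjunct2, THEN conjunct2, THEN conjunct2, THEN conjunct1]
  note W2o = W2all[THEN conjunct2, THEN conjunct2, THEN conjunct2, THEN conjunct2, THEN conjunct2]
  have fq: "fst q = (fst p \<noteq> odd lam)" unfolding p_def q_def using ispath_side[OF Qp il] .
  have par: "odd (d1 + lam + d2)" using nlam n(2) by simp
  have sides: "(fst q \<noteq> odd d2) = (\<not> (fst p \<noteq> odd d1))" using fq par by (auto simp: even_add)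
  have W1db: "W1 d1 \<subseteq> UNIV \<times> {..<b}"
  proof (cases "d1 = 0")
    case True then show ?thesis using W10 pVB VBb by auto
  next
    case False then show ?thesis using W1H H1b by blast
  qed
  have W2db: "W2 d2 \<subseteq> UNIV \<times> {..<b}" using W2H H2b d2pos by blast
  have o1: "onside (fst p \<noteq> odd d1) (W1 d1)" using W1o by simp
  have o2': "onside (fst q \<noteq> odd d2) (W2 d2)" using W2o by simp
  have o2: "onside (\<not> (fst p \<noteq> odd d1)) (W2 d2)" using o2' unfolding sides .
  have cc: "(m1 \<le> card (W1 d1) \<and> m2 \<le> card (W2 d2)) \<or> (m2 \<le> card (W1 d1) \<and> m1 \<le> card (W2 d2))"
    using W1c W2c d1(1) d2(1) by simp
  obtain s1 s2 where s1: "s1 \<in> W1 d1" and s2: "s2 \<in> W2 d2" and s12: "adj c s1 s2"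
    using NK_gen[OF NK W1db W2db o1 o2 cc] by blast
  obtain f1 where f1: "f1 0 = p" "f1 d1 = s1" "\<forall>i\<le>d1. f1 i \<in> W1 i" "\<forall>i<d1. adj c (f1 i) (f1 (Suc i))"
    using fan_path[OF W10 W1s order_refl s1] by blast
  obtain f2 where f2: "f2 0 = q" "f2 d2 = s2" "\<forall>i\<le>d2. f2 i \<in> W2 i" "\<forall>i<d2. adj c (f2 i) (f2 (Suc i))"
    using fan_path[OF W20 W2s order_refl s2] by blast
  define g where "g k = (if k < d1 then f1 (d1 - k) else if k \<le> d1 + lam then Q ! (i + (k - d1))
      else f2 (k - d1 - lam))" for k
  have reg1: "g k \<in> W1 (d1 - k) \<and> g k \<in> V1" if k: "k < d1" for k
  proof -
    have "g k = f1 (d1 - k)" unfolding g_def using k by simp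
    moreover have "f1 (d1 - k) \<in> W1 (d1 - k)" using f1(3) by simp
    moreover have "W1 (d1 - k) \<subseteq> H1" using W1H k by simp
    ultimately have a: "g k \<in> W1 (d1 - k)" "g k \<in> H1" by auto
    then show ?thesis using H1 by auto
  qed
  have reg2: "g k = Q ! (i + (k - d1)) \<and> i + (k - d1) < length Q \<and> g k \<in> VB"
    if k: "d1 \<le> k" "k \<le> d1 + lam" for k
  proof -
    have e: "g k = Q ! (i + (k - d1))" unfolding g_def using k by simp
    have l: "i + (k - d1) < length Q" using k il by linarith
    then have "Q ! (i + (k - d1)) \<in> VB" using QB by auto
    then show ?thesis using e l by simp
  qed
  have reg3: "g k \<in> W2 (k - d1 - lam) \<and> g k \<in> V2 \<and> 0 < k - d1 - lam \<and> k - d1 - lam \<le> d2"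
    if k: "d1 + lam < k" "k < n" for k
  proof -
    have e: "g k = f2 (k - d1 - lam)" unfolding g_def using k by simp
    have r: "0 < k - d1 - lam" "k - d1 - lam \<le> d2" using k nlam by linarith+
    have "f2 (k - d1 - lam) \<in> W2 (k - d1 - lam)" using f2(3) r by simp
    moreover have "W2 (k - d1 - lam) \<subseteq> H2" using W2H r by simp
    ultimately have a: "g k \<in> W2 (k - d1 - lam)" "g k \<in> H2" using e by auto
    then show ?thesis using H2 r by auto
  qed
  have inj: "inj_on g {..<n}"
  proof
    fix k k' assume k: "k \<in> {..<n}" and k': "k' \<in> {..<n}" and e: "g k = g k'"
    have kn: "k < n" "k' < n" using k k' by auto
    consider "k < d1" | "d1 \<le> k \<and> k \<le> d1 + lam" | "d1 + lam < k" by linarith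
    then show "k = k'"
    proof cases
      case 1
      note r = reg1[OF 1]
      consider "k' < d1" | "d1 \<le> k' \<and> k' \<le> d1 + lam" | "d1 + lam < k'" by linarith
      then show ?thesis
      proof cases
        case 1
        note r' = reg1[OF 1]
        have "d1 - k = d1 - k'"
        proof (rule ccontr)
          assume "d1 - k \<noteq> d1 - k'"
          then have "W1 (d1 - k) \<inter> W1 (d1 - k') = {}" using W1d by simp
          moreover have "g k \<in> W1 (d1 - k)" "g k \<in> W1 (d1 - k')" using r r' e by auto
          ultimately show False by auto
        qed
        then show ?thesis using \<open>k < d1\<close> 1 by linarith
      next
        case 2
        have "g k \<in> V1 \<inter> VB" using r reg2[of k'] 2 e by auto
        then show ?thesis using dj1B by simp
      next
        case 3
        have "g k \<in> V1 \<inter> V2" using r reg3[OF 3 kn(2)] e by auto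
        then show ?thesis using dj12 by simp
      qed
    next
      case 2
      note r = reg2[of k] 2
      consider "k' < d1" | "d1 \<le> k' \<and> k' \<le> d1 + lam" | "d1 + lam < k'" by linarith
      then show ?thesis
      proof cases
        case 1
        have "g k \<in> V1 \<inter> VB" using r reg1[OF 1] e by auto
        then show ?thesis using dj1B by simp
      next
        case 2
        have "Q ! (i + (k - d1)) = Q ! (i + (k' - d1))" using r reg2[of k'] 2 e by simp
        then have "i + (k - d1) = i + (k' - d1)" using nth_eq_iff_index_eq[OF Qd] r reg2[of k'] 2 by simp
        then show ?thesis using r 2 by linarith
      next
        case 3
        have "g k \<in> V2 \<inter> VB" using r reg3[OF 3 kn(2)] e by auto
        then show ?thesis using dj2B by simp
      qed
    next
      case 3
      note r = reg3[OF 3 kn(1)]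
      consider "k' < d1" | "d1 \<le> k' \<and> k' \<le> d1 + lam" | "d1 + lam < k'" by linarith
      then show ?thesis
      proof cases
        case 1
        have "g k \<in> V1 \<inter> V2" using r reg1[OF 1] e by auto
        then show ?thesis using dj12 by simp
      next
        case 2
        have "g k \<in> V2 \<inter> VB" using r reg2[of k'] 2 e by auto
        then show ?thesis using dj2B by simp
      next
        case c3: 3
        note r' = reg3[OF c3 kn(2)]
        have "k - d1 - lam = k' - d1 - lam"
        proof (rule ccontr)
          assume "k - d1 - lam \<noteq> k' - d1 - lam"
          then have "W2 (k - d1 - lam) \<inter> W2 (k' - d1 - lam) = {}" using W2d r r' by simp
          moreover have "g k \<in> W2 (k - d1 - lam)" "g k \<in> W2 (k' - d1 - lam)" using r r' e by auto
          ultimately show False by auto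
        qed
        then show ?thesis using 3 c3 by linarith
      qed
    qed
  qed
  have sb: "\<forall>k<n. snd (g k) < b"
  proof (intro allI impI)
    fix k assume kn: "k < n"
    consider "k < d1" | "d1 \<le> k \<and> k \<le> d1 + lam" | "d1 + lam < k" by linarith
    then have "g k \<in> UNIV \<times> {..<b}"
    proof cases
      case 1 then show ?thesis using reg1[OF 1] V1b by auto
    next
      case 2 then show ?thesis using reg2[of k] VBb by auto
    next
      case 3 then show ?thesis using reg3[OF 3 kn] V2b by auto
    qed
    then show "snd (g k) < b" by auto
  qed
  have ad: "\<forall>k. Suc k < n \<longrightarrow> adj c (g k) (g (Suc k))"
  proof (intro allI impI)
    fix k assume kn: "Suc k < n"
    consider "Suc k < d1" | "Suc k = d1" | "d1 \<le> k \<and> Suc k \<le> d1 + lam" | "k = d1 + lam" | "d1 + lam < k"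
      by linarith
    then show "adj c (g k) (g (Suc k))"
    proof cases
      case 1
      define j where "j = d1 - Suc k"
      have j: "j < d1" "d1 - k = Suc j" using 1 unfolding j_def by linarith+
      have "g k = f1 (Suc j)" unfolding g_def using 1 j by simp
      moreover have "g (Suc k) = f1 j" unfolding g_def using 1 j_def by simp
      moreover have "adj c (f1 j) (f1 (Suc j))" using f1(4) j by simp
      ultimately show ?thesis using adj_sym by metis
    next
      case 2
      have "d1 - k = Suc 0" using 2 by simp
      then have "g k = f1 (Suc 0)" unfolding g_def using 2 by simp
      moreover have "g (Suc k) = f1 0" unfolding g_def using 2 f1(1) p_def by simp
      moreover have "adj c (f1 0) (f1 (Suc 0))" using f1(4) 2 by simp
      ultimately show ?thesis using adj_sym by metis
    next
      case 3
      have "g k = Q ! (i + (k - d1))" unfolding g_def using 3 by simp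
      moreover have "g (Suc k) = Q ! Suc (i + (k - d1))" unfolding g_def using 3 by (simp add: Suc_diff_le)
      moreover have "Suc (i + (k - d1)) < length Q" using 3 il by linarith
      ultimately show ?thesis using Qp unfolding ispath_def by simp
    next
      case 4
      have "g k = f2 0" unfolding g_def using 4 f2(1) q_def by simp
      moreover have "g (Suc k) = f2 (Suc 0)" unfolding g_def using 4 by simp
      moreover have "adj c (f2 0) (f2 (Suc 0))" using f2(4) d2pos by simp
      ultimately show ?thesis by simp
    next
      case 5
      define j where "j = k - d1 - lam"
      have j: "j < d2" "Suc k - d1 - lam = Suc j" using 5 kn nlam unfolding j_def by linarith+
      have "g k = f2 j" unfolding g_def using 5 j_def by simp
      moreover have "g (Suc k) = f2 (Suc j)" unfolding g_def using 5 j by simp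
      moreover have "adj c (f2 j) (f2 (Suc j))" using f2(4) j by simp
      ultimately show ?thesis by simp
    qed
  qed
  have cl: "adj c (g (n-1)) (g 0)"
  proof -
    have "g (n-1) = f2 d2" unfolding g_def using nlam d2pos by simp
    then have gn: "g (n-1) = s2" using f2(2) by simp
    have g0: "g 0 = s1"
    proof (cases "0 < d1")
      case True then show ?thesis unfolding g_def using f1(2) by simp
    next
      case False
      then have "d1 = 0" by simp
      then have "s1 = p" using s1 W10 by simp
      then show ?thesis unfolding g_def using \<open>d1 = 0\<close> p_def by simp
    qed
    show ?thesis using gn g0 s12 adj_sym by metis
  qed
  show ?thesis by (rule cyc_to_copy[OF n(2) n2 inj sb ad cl])
qed



lemma pow_ceil:
  assumes m: "0 < m"
  shows "m \<le> 2 ^ nat \<lceil>log 2 (real m)\<rceil> \<and> 0 \<le> \<lceil>log 2 (real m)\<rceil>"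
proof -
  have rm: "1 \<le> real m" using m by simp
  have l0: "0 \<le> log 2 (real m)" using rm by simp
  then have c0: "0 \<le> \<lceil>log 2 (real m)\<rceil>" by simp
  have "real m = 2 powr (log 2 (real m))" using rm by simp
  also have "\<dots> \<le> 2 powr (real_of_int \<lceil>log 2 (real m)\<rceil>)"
    by (rule powr_mono) (simp_all add: le_of_int_ceiling)
  also have "real_of_int \<lceil>log 2 (real m)\<rceil> = real (nat \<lceil>log 2 (real m)\<rceil>)" using c0 by simp
  also have "(2::real) powr real (nat \<lceil>log 2 (real m)\<rceil>) = 2 ^ nat \<lceil>log 2 (real m)\<rceil>"
    by (rule powr_realpow) simp
  finally have "real m \<le> real (2 ^ nat \<lceil>log 2 (real m)\<rceil>)" by simp
  then show ?thesis using c0 by (simp only: of_nat_le_iff)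
qed

lemma least_pow:
  fixes m D :: nat
  assumes "m \<le> 2^D"
  shows "m \<le> 2^(LEAST d. m \<le> 2^d) \<and> (LEAST d. m \<le> 2^d) \<le> D \<and> (\<forall>j<(LEAST d. m \<le> 2^d). 2^j < m)"
proof (intro conjI)
  show "m \<le> 2^(LEAST d. m \<le> 2^d)" using assms by (rule LeastI)
  show "(LEAST d. m \<le> 2^d) \<le> D" using assms by (rule Least_le)
  show "\<forall>j<(LEAST d. m \<le> 2^d). 2^j < m"
  proof (intro allI impI)
    fix j assume "j < (LEAST d. m \<le> 2^d)"
    then have "\<not> m \<le> 2^j" by (rule not_less_Least)
    then show "2^j < m" by simp
  qed
qed

theorem lemma2p4:
  fixes m1 m2 n :: nat
  assumes "m1 > 0" and "m2 > 0" and "even n"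
    and "m2 \<ge> n"
    and "int n \<ge> \<lceil>log 2 (real m1)\<rceil> + \<lceil>log 2 (real m2)\<rceil> + 1"
  shows "BR_cycle_K n m1 m2 \<le> 32 * m1 + 49 * m2"
proof -
  define D1 where "D1 = nat \<lceil>log 2 (real m1)\<rceil>"
  define D2 where "D2 = nat \<lceil>log 2 (real m2)\<rceil>"
  have e1: "m1 \<le> 2^D1" "0 \<le> \<lceil>log 2 (real m1)\<rceil>" using pow_ceil[OF assms(1)] unfolding D1_def by auto
  have e2: "m2 \<le> 2^D2" "0 \<le> \<lceil>log 2 (real m2)\<rceil>" using pow_ceil[OF assms(2)] unfolding D2_def by auto
  define d1 where "d1 = (LEAST d. m1 \<le> 2^d)"
  define d2 where "d2 = (LEAST d. m2 \<le> 2^d)"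
  have f1: "m1 \<le> 2^d1" "d1 \<le> D1" "\<forall>j<d1. 2^j < m1"
    using least_pow[OF e1(1)] unfolding d1_def by auto
  have f2: "m2 \<le> 2^d2" "d2 \<le> D2" "\<forall>j<d2. 2^j < m2"
    using least_pow[OF e2(1)] unfolding d2_def by auto
  have "int (D1 + D2 + 1) \<le> int n" using assms(5) e1(2) e2(2) unfolding D1_def D2_def by simp
  then have nD: "d1 + d2 + 1 \<le> n" using f1(2) f2(2) by linarith
  define b where "b = 32 * m1 + 49 * m2"
  have P: "\<forall>c :: nat \<Rightarrow> nat \<Rightarrow> nat. (\<forall>x<b. \<forall>y<b. c x y \<in> {1, 2}) \<longrightarrow>
      has_cycle_copy b c 1 n \<or> has_Kst_copy b c 2 m1 m2"
  proof (intro allI impI)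
    fix c :: "nat \<Rightarrow> nat \<Rightarrow> nat"
    assume rng: "\<forall>x<b. \<forall>y<b. c x y \<in> {1, 2}"
    show "has_cycle_copy b c 1 n \<or> has_Kst_copy b c 2 m1 m2"
    proof (cases "has_Kst_copy b c 2 m1 m2")
      case True then show ?thesis by simp
    next
      case False
      have NK: "NK c b m1 m2" by (rule NK_from[OF rng False])
      have "has_cycle_copy b c 1 n"
        by (rule main_cycle[OF NK assms(1,2) _ f1(1,3) f2(1,3) nD assms(3,4)]) (simp add: b_def)
      then show ?thesis by simp
    qed
  qed
  show ?thesis unfolding BR_cycle_K_def b_def[symmetric] by (rule Least_le) (rule P)
qed


end
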